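(* At the end of every iteration of the main loop of MAPTree, for every OR node $u\in\mathcal G'$, $UB[u]$ equals the minimum cost of a partial solution rooted at $u$ in $\mathcal G'$ (and $UB[u]=+\infty$ if no such partial solution exists).
   Context: Let $x_1,\dots,x_N\in\{0,1\}^F$ be a binary dataset $\mathcal X$ with labels $\mathcal Y\in\{0,1\}^N$, $[N]=\{1,\dots,N\}$. For $\mathcal I\subseteq[N]$, $f\in[F]$, $k\in\{0,1\}$ let $\mathcal I|_{f=k}=\{i\in\mathcal I:(x_i)_f=k\}$, $c^k(\mathcal I)=|\{i\in\mathcal I:y_i=k\}|$, $\mathcal V(\mathcal I)=\{f:\mathcal I|_{f=0}\neq\emptyset\text{ and }\mathcal I|_{f=1}\neq\emptyset\}$. Fix $\rho^1,\rho^0>0$, $\alpha\in(0,1)$, $\beta\ge0$; $\ell_{\rm leaf}(c^1,c^0)=B(c^1+\rho^1,c^0+\rho^0)/B(\rho^1,\rho^0)$ ($B$ the Beta function), $p_{\rm split}(d)=\alpha(1+d)^{-\beta}$, $p_{\rm leaf}(d,\mathcal I)=1$ if $\mathcal V(\mathcal I)=\emptyset$ else $1-p_{\rm split}(d)$, $p_{\rm inner}(d,\mathcal I)=0$ if $\mathcal V(\mathcal I)=\emptyset$ else $p_{\rm split}(d)/|\mathcal V(\mathcal I)|$; $-\log0=+\infty$, and a minimum over an empty set is $+\infty$. Graph $\mathcal G=\mathcal G_{\mathcal X,\mathcal Y}$: for nonempty $\mathcal I\subseteq[N]$, $d\in\{0,\dots,F\}$, an OR node $o_{\mathcal I,d}$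 with terminal child $t_{\mathcal I,d}$ (edge cost $-\log p_{\rm leaf}(d,\mathcal I)-\log\ell_{\rm leaf}(c^1(\mathcal I),c^0(\mathcal I))$); for $d<F$, $f\in\mathcal V(\mathcal I)$, an AND child $a_{\mathcal I,d,f}$ (edge cost $-\log p_{\rm inner}(d,\mathcal I)$) with cost-$0$ edges to $o_{\mathcal I|_{f=0},d+1}$, $o_{\mathcal I|_{f=1},d+1}$; root $r=o_{[N],0}$; only nodes reachable from $r$ kept. A partial solution rooted at an OR node $u$ in $\mathcal G'$ is a set $\mathcal S\subseteq\mathcal G'$ containing $u$, all of whose nodes are reachable from $u$ inside $\mathcal S$, such that every AND node of $\mathcal S$ has both children in $\mathcal S$ and every OR node of $\mathcal S$ has exactly one child in $\mathcal S$; its cost is the sum of the costs of edges $v\to w$ with $v,w\in\mathcal S$. Heuristic: $h(o_{\mathcal I,d})=-\max\{\log\ell_{\rm leaf}(c^1(\mathcal I),c^0(\mathcal I)),\log p_{\rm split}(d)+\log\ell_{\rm leaf}(c^1(\mathcal I),0)+\log\ell_{\rm leaf}(0,c^0(\mathcal I))\}$. MAPTree maintains a node set $\mathcal G'$, a set $\mathcal E$ of expanded OR nodes, and values $LB[u],UB[u]\in\mathbb R\cup\{+\infty\}$ for OR nodes ($UB[u]=+\infty$ until set); for an AND node $a$ with children $o_0,o_1$, $LB[a]=LB[o_0]+LB[o_1]$ and $UB[a]=UB[o_0]+UB[o_1]$. Initialize $\mathcal G'=\{r\}$, $\mathcal E=\emptyset$, $LB[r]=h(r)$, $UB[r]=+\infty$.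 While $LB[r]<UB[r]$ (and optionally while time remains): (1) $o:=r$; while $o\in\mathcal E$, choose an AND child $a^*$ of $o$ minimizing $\mathrm{cost}(o,a)+LB[a]$, with children $o_0$ (value-0 side) and $o_1$, and set $o:=o_0$ if $UB[o_0]-LB[o_0]>UB[o_1]-LB[o_1]$, else $o:=o_1$. (2) Add $o$ to $\mathcal E$ and its terminal child to $\mathcal G'$; for each AND child $a$ of $o$ with children $o_0,o_1$, add $a,o_0,o_1$ to $\mathcal G'$ and set $LB[o_0]:=h(o_0)$, $LB[o_1]:=h(o_1)$. (3) Starting from $Q=\{o\}$, repeatedly remove from $Q$ an OR node $u$ of maximal depth, compute $v=\min\{\min_a(\mathrm{cost}(u,a)+LB[a]),\mathrm{cost}(u,t_u)\}$ over the AND children $a$ and terminal child $t_u$ of $u$; if $v>LB[u]$, set $LB[u]:=v$ and add to $Q$ every OR node of $\mathcal G'$ that is the parent of an AND node of $\mathcal G'$ having $u$ as child. (4) The same with $UB$ in place of $LB$, updating when $v<UB[u]$. *)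

theory Defs
  imports "HOL-Analysis.Analysis"
begin

text \<open>Nodes of the AND/OR graph: OR node o_{I,d}, AND node a_{I,d,f}, terminal node t_{I,d}.
  Data points are indexed by 1..N, features by 1..F; binary values are booleans
  (True = 1, False = 0).\<close>

datatype node = OrN "nat set" nat | AndN "nat set" nat nat | TermN "nat set" nat

fun is_or :: "node \<Rightarrow> bool" where
  "is_or (OrN _ _) = True" | "is_or _ = False"
fun is_and :: "node \<Rightarrow> bool" where
  "is_and (AndN _ _ _) = True" | "is_and _ = False"
fun is_term :: "node \<Rightarrow> bool" where
  "is_term (TermN _ _) = True" | "is_term _ = False"
fun depth :: "node \<Rightarrow> nat" where
  "depth (OrN _ d) = d" | "depth (AndN _ d _) = d" | "depth (TermN _ d) = d"

definition neglog :: "real \<Rightarrow> ereal" where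
  "neglog p = (if p = 0 then \<infinity> else ereal (- ln p))"

text \<open>An algorithm state: (G', E, LB, UB).\<close>
type_synonym state = "node set \<times> node set \<times> (node \<Rightarrow> ereal) \<times> (node \<Rightarrow> ereal)"

locale maptree =
  fixes N F :: nat
    and X :: "nat \<Rightarrow> nat \<Rightarrow> bool"   \<comment> \<open>X i f = (x_i)_f\<close>
    and Y :: "nat \<Rightarrow> bool"            \<comment> \<open>Y i = (y_i = 1)\<close>
    and rho1 rho0 alpha beta :: real
begin

definition restr :: "nat set \<Rightarrow> nat \<Rightarrow> bool \<Rightarrow> nat set" where
  "restr I f k = {i \<in> I. X i f = k}"

definition c1 :: "nat set \<Rightarrow> nat" where "c1 I = card {i \<in> I. Y i}"
definition c0 :: "nat set \<Rightarrow> nat" where "c0 I = card {i \<in> I. \<not> Y i}"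

definition Vs :: "nat set \<Rightarrow> nat set" where
  "Vs I = {f \<in> {1..F}. restr I f False \<noteq> {} \<and> restr I f True \<noteq> {}}"

definition lleaf :: "nat \<Rightarrow> nat \<Rightarrow> real" where
  "lleaf a b = Beta (real a + rho1) (real b + rho0) / Beta rho1 rho0"

definition psplit :: "nat \<Rightarrow> real" where
  "psplit d = alpha * (1 + real d) powr (- beta)"

definition pleaf :: "nat \<Rightarrow> nat set \<Rightarrow> real" where
  "pleaf d I = (if Vs I = {} then 1 else 1 - psplit d)"

definition pinner :: "nat \<Rightarrow> nat set \<Rightarrow> real" where
  "pinner d I = (if Vs I = {} then 0 else psplit d / real (card (Vs I)))"

fun edge :: "node \<Rightarrow> node \<Rightarrow> bool" where
  "edge (OrN I d) w = (w = TermN I d \<or> (\<exists>f. d < F \<and> f \<in> Vs I \<and> w = AndN I d f))"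
| "edge (AndN I d f) w = (w = OrN (restr I f False) (Suc d) \<or> w = OrN (restr I f True) (Suc d))"
| "edge (TermN _ _) w = False"

definition root :: node where "root = OrN {1..N} 0"

definition Gnodes :: "node set" where "Gnodes = {u. edge\<^sup>*\<^sup>* root u}"

fun cost :: "node \<Rightarrow> node \<Rightarrow> ereal" where
  "cost (OrN I d) (TermN _ _) = neglog (pleaf d I) + neglog (lleaf (c1 I) (c0 I))"
| "cost (OrN I d) (AndN _ _ _) = neglog (pinner d I)"
| "cost _ _ = 0"

fun h :: "node \<Rightarrow> ereal" where
  "h (OrN I d) = ereal (- max (ln (lleaf (c1 I) (c0 I)))
                     (ln (psplit d) + ln (lleaf (c1 I) 0) + ln (lleaf 0 (c0 I))))"
| "h _ = 0"

fun andval :: "(node \<Rightarrow> ereal) \<Rightarrow> node \<Rightarrow> ereal" where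
  "andval V (AndN I d f) = V (OrN (restr I f False) (Suc d)) + V (OrN (restr I f True) (Suc d))"
| "andval V _ = 0"

definition orval :: "node set \<Rightarrow> (node \<Rightarrow> ereal) \<Rightarrow> node \<Rightarrow> ereal" where
  "orval G V u = Inf ({cost u a + andval V a | a. a \<in> G \<and> is_and a \<and> edge u a}
                     \<union> {cost u t | t. t \<in> G \<and> is_term t \<and> edge u t})"

definition parents :: "node set \<Rightarrow> node \<Rightarrow> node set" where
  "parents G u = {p \<in> G. is_or p \<and> (\<exists>a \<in> G. is_and a \<and> edge p a \<and> edge a u)}"

text \<open>Steps (3)/(4): propagation with queue Q; nondeterministic choice of a node of
  maximal depth. better v old decides whether to update (v > old for LB, v < old for UB).\<close>
inductive propagate :: "(ereal \<Rightarrow> ereal \<Rightarrow> bool) \<Rightarrow> node set \<Rightarrow> (node \<Rightarrow> ereal)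
    \<Rightarrow> node set \<Rightarrow> (node \<Rightarrow> ereal) \<Rightarrow> bool" where
  prop_done: "propagate better G V {} V"
| prop_upd: "\<lbrakk> u \<in> Q; \<forall>q \<in> Q. depth q \<le> depth u; better (orval G V u) (V u);
          propagate better G (V(u := orval G V u)) ((Q - {u}) \<union> parents G u) V' \<rbrakk>
        \<Longrightarrow> propagate better G V Q V'"
| prop_noupd: "\<lbrakk> u \<in> Q; \<forall>q \<in> Q. depth q \<le> depth u; \<not> better (orval G V u) (V u);
          propagate better G V (Q - {u}) V' \<rbrakk>
        \<Longrightarrow> propagate better G V Q V'"

text \<open>Step (1): descent from u to the selected node ov (nondeterministic tie-breaking).\<close>
inductive descend :: "node set \<Rightarrow> node set \<Rightarrow> (node \<Rightarrow> ereal) \<Rightarrow> (node \<Rightarrow> ereal)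
    \<Rightarrow> node \<Rightarrow> node \<Rightarrow> bool" where
  stop: "u \<notin> E \<Longrightarrow> descend G E LB UB u u"
| down: "\<lbrakk> u \<in> E; a = AndN I d f; a \<in> G; edge u a;
           \<forall>b. b \<in> G \<and> is_and b \<and> edge u b \<longrightarrow> cost u a + andval LB a \<le> cost u b + andval LB b;
           o0 = OrN (restr I f False) (Suc d); o1 = OrN (restr I f True) (Suc d);
           descend G E LB UB (if UB o0 - LB o0 > UB o1 - LB o1 then o0 else o1) v \<rbrakk>
        \<Longrightarrow> descend G E LB UB u v"

text \<open>Step (2): the OR children of the AND children of ov (these get LB := h).\<close>
definition grandchildren :: "node \<Rightarrow> node set" where
  "grandchildren ov = {w. \<exists>a. is_and a \<and> edge ov a \<and> edge a w}"

definition expand_nodes :: "node \<Rightarrow> node set" where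
  "expand_nodes ov = {t. is_term t \<and> edge ov t} \<union> {a. is_and a \<and> edge ov a} \<union> grandchildren ov"

inductive iter :: "state \<Rightarrow> state \<Rightarrow> bool" where
  "\<lbrakk> LB root < UB root;
     descend G E LB UB root ov;
     G2 = G \<union> expand_nodes ov;
     LB2 = (\<lambda>w. if w \<in> grandchildren ov then h w else LB w);
     propagate (\<lambda>v old. v > old) G2 LB2 {ov} LB3;
     propagate (\<lambda>v old. v < old) G2 UB {ov} UB3 \<rbrakk>
   \<Longrightarrow> iter (G, E, LB, UB) (G2, E \<union> {ov}, LB3, UB3)"

definition init :: state where
  "init = ({root}, {}, (\<lambda>_. 0)(root := h root), (\<lambda>_. \<infinity>))"

definition partial_sol :: "node set \<Rightarrow> node \<Rightarrow> node set \<Rightarrow> bool" where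
  "partial_sol G u S \<longleftrightarrow> S \<subseteq> G \<and> u \<in> S
     \<and> (\<forall>w \<in> S. (\<lambda>a b. a \<in> S \<and> b \<in> S \<and> edge a b)\<^sup>*\<^sup>* u w)
     \<and> (\<forall>a \<in> S. is_and a \<longrightarrow> (\<forall>w. edge a w \<longrightarrow> w \<in> S))
     \<and> (\<forall>v \<in> S. is_or v \<longrightarrow> (\<exists>!w. w \<in> S \<and> edge v w))"

definition psol_cost :: "node set \<Rightarrow> ereal" where
  "psol_cost S = (\<Sum>(v, w) \<in> {(v, w). v \<in> S \<and> w \<in> S \<and> edge v w}. cost v w)"

end

definition MT_iter where "MT_iter N F X Y rho1 rho0 alpha beta = maptree.iter N F X Y rho1 rho0 alpha beta"
definition MT_init where "MT_init N F X Y rho1 rho0 alpha beta = maptree.init N Y rho1 rho0 alpha beta"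
definition MT_partial_sol where "MT_partial_sol N F X Y rho1 rho0 alpha beta = maptree.partial_sol F X"
definition MT_psol_cost where "MT_psol_cost N F X Y rho1 rho0 alpha beta = maptree.psol_cost F X Y rho1 rho0 alpha beta"

end

theory Submission
  imports Defs
begin

context maptree begin

fun idx :: "node \<Rightarrow> nat set" where
  "idx (OrN I _) = I" | "idx (AndN I _ _) = I" | "idx (TermN I _) = I"

lemma edge_basic: "edge v w \<Longrightarrow> idx w \<subseteq> idx v \<and> depth v \<le> depth w"
  by (cases v) (auto simp: restr_def)

lemma edge_or: "edge v w \<Longrightarrow> is_or v \<Longrightarrow> \<not> is_or w \<and> depth w = depth v \<and> v = OrN (idx w) (depth w)"
  by (cases v) auto

lemma edge_and: "edge a w \<Longrightarrow> is_and a \<Longrightarrow> is_or w \<and> depth w = Suc (depth a)"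
  by (cases a) auto

lemma edge_nonor_src: "edge v w \<Longrightarrow> \<not> is_or w \<Longrightarrow> is_or v"
  by (cases v) auto

lemma edge_src_or_and: "edge v w \<Longrightarrow> is_or v \<or> is_and v"
  by (cases v) auto

lemma reach_R: "edge\<^sup>*\<^sup>* (OrN J e) w \<Longrightarrow> idx w \<subseteq> J \<and> e \<le> depth w \<and> (J \<noteq> {} \<longrightarrow> idx w \<noteq> {})
   \<and> (\<forall>J' e' f. w = AndN J' e' f \<longrightarrow> f \<in> Vs J')"
proof (induction rule: rtranclp_induct)
  case base thus ?case by simp
next
  case (step y z)
  then show ?case
  proof (cases y)
    case (AndN J' e' f)
    with step have "f \<in> Vs J'" by auto
    then have "restr J' f False \<noteq> {}" "restr J' f True \<noteq> {}" by (auto simp: Vs_def)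
    with step AndN show ?thesis by (auto simp: restr_def)
  qed auto
qed


definition Es :: "node set \<Rightarrow> (node \<times> node) set" where
  "Es S = {(v,w). v \<in> S \<and> w \<in> S \<and> edge v w}"

lemma psol_cost_Es: "psol_cost S = (\<Sum>(v,w)\<in>Es S. cost v w)"
  unfolding psol_cost_def Es_def ..

lemma finite_Es: "finite S \<Longrightarrow> finite (Es S)"
  by (rule finite_subset[of _ "S \<times> S"]) (auto simp: Es_def)


lemma sep:
  assumes x: "x = OrN I d" and a: "a = AndN I d f" and ex: "edge x a"
  and o0: "o0 = OrN (restr I f False) (Suc d)" and o1: "o1 = OrN (restr I f True) (Suc d)"
  and R0: "\<forall>w\<in>S0. edge\<^sup>*\<^sup>* o0 w" and R1: "\<forall>w\<in>S1. edge\<^sup>*\<^sup>* o1 w"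
  shows "x \<notin> S0" "x \<notin> S1" "a \<notin> S0" "a \<notin> S1" "S0 \<inter> S1 = {}" "o0 \<noteq> o1"
   "\<And>v w. v \<in> S0 \<Longrightarrow> edge v w \<Longrightarrow> w \<in> insert x (insert a S1) \<Longrightarrow> False"
   "\<And>v w. v \<in> S1 \<Longrightarrow> edge v w \<Longrightarrow> w \<in> insert x (insert a S0) \<Longrightarrow> False"
   "\<And>w. edge x w \<Longrightarrow> w \<in> S0 \<union> S1 \<Longrightarrow> False"
proof -
  have fV: "f \<in> Vs I" using ex x a by auto
  define I0 where "I0 = restr I f False"
  define I1 where "I1 = restr I f True"
  have ne: "I0 \<noteq> {}" "I1 \<noteq> {}" using fV by (auto simp: Vs_def I0_def I1_def)
  have dj: "I0 \<inter> I1 = {}" by (auto simp: I0_def I1_def restr_def)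
  have P0: "idx w \<subseteq> I0 \<and> Suc d \<le> depth w \<and> idx w \<noteq> {}" if "w \<in> S0" for w
    using reach_R[of I0 "Suc d" w] R0 that ne o0 unfolding I0_def by auto
  have P1: "idx w \<subseteq> I1 \<and> Suc d \<le> depth w \<and> idx w \<noteq> {}" if "w \<in> S1" for w
    using reach_R[of I1 "Suc d" w] R1 that ne o1 unfolding I1_def by auto
  have D: "Suc d \<le> depth w" if "w \<in> S0 \<union> S1" for w using P0 P1 that by blast
  have dx: "depth x = d" and da: "depth a = d" using x a by simp_all
  show "x \<notin> S0" "x \<notin> S1" "a \<notin> S0" "a \<notin> S1" using D[of x] D[of a] dx da by auto
  show "S0 \<inter> S1 = {}"
  proof (rule ccontr)
    assume "S0 \<inter> S1 \<noteq> {}"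
    then obtain w where "w \<in> S0" "w \<in> S1" by blast
    then have "idx w \<subseteq> I0" "idx w \<subseteq> I1" "idx w \<noteq> {}" using P0 P1 by auto
    then show False using dj by blast
  qed
  show "o0 \<noteq> o1"
  proof
    assume "o0 = o1"
    then have "I0 = I1" using o0 o1 unfolding I0_def I1_def by simp
    then show False using ne dj by simp
  qed
  show False if "v \<in> S0" "edge v w" "w \<in> insert x (insert a S1)" for v w
  proof -
    have h: "idx w \<subseteq> I0" "Suc d \<le> depth w" using P0[OF that(1)] edge_basic[OF that(2)] by auto
    show False
    proof (cases "w \<in> S1")
      case True
      then have "idx w \<subseteq> I1" "idx w \<noteq> {}" using P1 by auto
      then show False using h dj by blast
    next
      case False
      then have "w = x \<or> w = a" using that(3) by blast
      then show False using h dx da by auto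
    qed
  qed
  show False if "v \<in> S1" "edge v w" "w \<in> insert x (insert a S0)" for v w
  proof -
    have h: "idx w \<subseteq> I1" "Suc d \<le> depth w" using P1[OF that(1)] edge_basic[OF that(2)] by auto
    show False
    proof (cases "w \<in> S0")
      case True
      then have "idx w \<subseteq> I0" "idx w \<noteq> {}" using P0 by auto
      then show False using h dj by blast
    next
      case False
      then have "w = x \<or> w = a" using that(3) by blast
      then show False using h dx da by auto
    qed
  qed
  show False if "edge x w" "w \<in> S0 \<union> S1" for w
  proof -
    have "is_or x" using x by simp
    then have "depth w = depth x" using edge_or[OF that(1)] by blast
    then show False using D[OF that(2)] dx by simp
  qed
qed

lemma decomp:
  assumes x: "x = OrN I d" and a: "a = AndN I d f" and ex: "edge x a"
  and o0: "o0 = OrN (restr I f False) (Suc d)" and o1: "o1 = OrN (restr I f True) (Suc d)"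
  and R0: "\<forall>w\<in>S0. edge\<^sup>*\<^sup>* o0 w" and R1: "\<forall>w\<in>S1. edge\<^sup>*\<^sup>* o1 w"
  and i0: "o0 \<in> S0" and i1: "o1 \<in> S1" and f0: "finite S0" and f1: "finite S1"
  shows "psol_cost (insert x (insert a (S0 \<union> S1))) = cost x a + psol_cost S0 + psol_cost S1"
proof -
  note sp = sep[OF x a ex o0 o1 R0 R1]
  have ox: "is_or x" using x by simp
  have xa: "x \<noteq> a" using x a by simp
  have ea0: "edge a o0" and ea1: "edge a o1" using a o0 o1 by simp_all
  have ach: "w = o0 \<or> w = o1" if "edge a w" for w using that a o0 o1 by simp
  let ?S = "insert x (insert a (S0 \<union> S1))"
  let ?R = "insert (x,a) (insert (a,o0) (insert (a,o1) (Es S0 \<union> Es S1)))"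
  have eq: "Es ?S = ?R"
  proof (rule set_eqI, rule iffI)
    fix p assume p: "p \<in> Es ?S"
    obtain v w where vw: "p = (v,w)" by (cases p)
    have v: "v \<in> ?S" and w: "w \<in> ?S" and e: "edge v w" using p vw by (auto simp: Es_def)
    show "p \<in> ?R"
    proof -
      { assume vx: "v = x"
        have "\<not> is_or w" using edge_or[OF _ ox] e vx by blast
        then have "w \<noteq> x" using ox by auto
        moreover have "w \<notin> S0 \<union> S1" using sp(9)[of w] e vx by blast
        ultimately have "w = a" using w by blast
        then have ?thesis using vw vx by simp }
      moreover
      { assume "v = a"
        then have ?thesis using vw e ach by auto }
      moreover
      { assume "v \<in> S0"
        then have "w \<in> S0" using sp(7)[of v w] e w by blast
        then have ?thesis using vw \<open>v \<in> S0\<close> e by (simp add: Es_def) }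
      moreover
      { assume "v \<in> S1"
        then have "w \<in> S1" using sp(8)[of v w] e w by blast
        then have ?thesis using vw \<open>v \<in> S1\<close> e by (simp add: Es_def) }
      ultimately show ?thesis using v by blast
    qed
  next
    fix p assume "p \<in> ?R"
    then show "p \<in> Es ?S" using ex i0 i1 ea0 ea1 unfolding Es_def by blast
  qed
  have fin: "finite (Es S0 \<union> Es S1)" using f0 f1 finite_Es by auto
  have n1: "(a,o1) \<notin> Es S0 \<union> Es S1" using sp(3,4) by (auto simp: Es_def)
  have n2: "(a,o0) \<notin> insert (a,o1) (Es S0 \<union> Es S1)" using sp(3,4,6) by (auto simp: Es_def)
  have n3: "(x,a) \<notin> insert (a,o0) (insert (a,o1) (Es S0 \<union> Es S1))"
    using sp(1,2) xa by (auto simp: Es_def)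
  have dj: "Es S0 \<inter> Es S1 = {}" using sp(5) by (auto simp: Es_def)
  have c0: "cost a w = 0" for w using a by simp
  have "psol_cost ?S = cost x a + (cost a o0 + (cost a o1 + (\<Sum>(v,w)\<in>Es S0 \<union> Es S1. cost v w)))"
    unfolding psol_cost_Es eq
    using fin n1 n2 n3 by (simp add: sum.insert)
  also have "(\<Sum>(v,w)\<in>Es S0 \<union> Es S1. cost v w) = psol_cost S0 + psol_cost S1"
    unfolding psol_cost_Es using dj f0 f1 finite_Es by (simp add: sum.union_disjoint)
  finally show ?thesis using c0 by (simp add: add.assoc)
qed


definition Tv :: "node set \<Rightarrow> node \<Rightarrow> ereal" where
  "Tv G x = (if {S. partial_sol G x S} = {} then \<infinity> else Min (psol_cost ` {S. partial_sol G x S}))"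

lemma psols_finite: "finite G \<Longrightarrow> finite {S. partial_sol G x S}"
  by (rule finite_subset[of _ "Pow G"]) (auto simp: partial_sol_def)

lemma Tv_le: "finite G \<Longrightarrow> partial_sol G x S \<Longrightarrow> Tv G x \<le> psol_cost S"
proof -
  assume f: "finite G" and P: "partial_sol G x S"
  have ne: "{S. partial_sol G x S} \<noteq> {}" using P by blast
  have "Min (psol_cost ` {S. partial_sol G x S}) \<le> psol_cost S"
    by (rule Min_le) (use psols_finite[OF f, of x] P in auto)
  then show ?thesis using ne unfolding Tv_def by (simp only: if_False)
qed

lemma Tv_attain: "finite G \<Longrightarrow> {S. partial_sol G x S} \<noteq> {} \<Longrightarrow> \<exists>S. partial_sol G x S \<and> Tv G x = psol_cost S"
proof -
  assume f: "finite G" and ne: "{S. partial_sol G x S} \<noteq> {}"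
  have "Min (psol_cost ` {S. partial_sol G x S}) \<in> psol_cost ` {S. partial_sol G x S}"
    using psols_finite[OF f, of x] ne by (intro Min_in) auto
  then show ?thesis using ne unfolding Tv_def by auto
qed

lemma Tv_ge: "finite G \<Longrightarrow> (\<And>S. partial_sol G x S \<Longrightarrow> c \<le> psol_cost S) \<Longrightarrow> c \<le> Tv G x"
proof -
  assume f: "finite G" and H: "\<And>S. partial_sol G x S \<Longrightarrow> c \<le> psol_cost S"
  show ?thesis
  proof (cases "{S. partial_sol G x S} = {}")
    case True then show ?thesis unfolding Tv_def by simp
  next
    case False
    then obtain S where "partial_sol G x S" "Tv G x = psol_cost S" using Tv_attain[OF f] by blast
    then show ?thesis using H by simp
  qed
qed

lemma Tv_notin: "x \<notin> G \<Longrightarrow> Tv G x = \<infinity>"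
  unfolding Tv_def partial_sol_def by auto

lemma psol_mono: "partial_sol G x S \<Longrightarrow> G \<subseteq> G' \<Longrightarrow> partial_sol G' x S"
  unfolding partial_sol_def by blast

lemma Tv_mono: "finite G' \<Longrightarrow> finite G \<Longrightarrow> G \<subseteq> G' \<Longrightarrow> Tv G' x \<le> Tv G x"
proof -
  assume f': "finite G'" and f: "finite G" and s: "G \<subseteq> G'"
  show ?thesis
  proof (cases "{S. partial_sol G x S} = {}")
    case True then show ?thesis unfolding Tv_def by simp
  next
    case False
    then obtain S where "partial_sol G x S" "Tv G x = psol_cost S" using Tv_attain[OF f] by blast
    then show ?thesis using Tv_le[OF f' psol_mono[OF _ s]] by simp
  qed
qed

lemma psol_reach: "partial_sol G x S \<Longrightarrow> w \<in> S \<Longrightarrow> edge\<^sup>*\<^sup>* x w"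
proof -
  assume "partial_sol G x S" "w \<in> S"
  then have "(\<lambda>a b. a \<in> S \<and> b \<in> S \<and> edge a b)\<^sup>*\<^sup>* x w" unfolding partial_sol_def by blast
  then show ?thesis
  proof (induction rule: rtranclp_induct)
    case base then show ?case by simp
  next
    case (step y z)
    then have "edge y z" by simp
    with step.IH show ?case by (rule rtranclp.rtrancl_into_rtrancl)
  qed
qed

definition sub :: "node set \<Rightarrow> node \<Rightarrow> node set" where
  "sub S r = {w \<in> S. (\<lambda>a b. a \<in> S \<and> b \<in> S \<and> edge a b)\<^sup>*\<^sup>* r w}"

lemma sub_step: "w \<in> sub S r \<Longrightarrow> z \<in> S \<Longrightarrow> edge w z \<Longrightarrow> z \<in> sub S r"
  unfolding sub_def
proof -
  assume a: "w \<in> {w \<in> S. (\<lambda>a b. a \<in> S \<and> b \<in> S \<and> edge a b)\<^sup>*\<^sup>* r w}" "z \<in> S" "edge w z"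
  then have "(\<lambda>a b. a \<in> S \<and> b \<in> S \<and> edge a b)\<^sup>*\<^sup>* r w" "w \<in> S" by auto
  then have "(\<lambda>a b. a \<in> S \<and> b \<in> S \<and> edge a b)\<^sup>*\<^sup>* r z"
    using a(2,3) by (simp add: rtranclp.rtrancl_into_rtrancl)
  then show "z \<in> {w \<in> S. (\<lambda>a b. a \<in> S \<and> b \<in> S \<and> edge a b)\<^sup>*\<^sup>* r w}" using a(2) by simp
qed

lemma sub_psol:
  assumes P: "partial_sol G x S" and r: "r \<in> S"
  shows "partial_sol G r (sub S r)"
proof -
  let ?Rs = "\<lambda>a b. a \<in> S \<and> b \<in> S \<and> edge a b"
  let ?Rt = "\<lambda>a b. a \<in> sub S r \<and> b \<in> sub S r \<and> edge a b"
  have sS: "sub S r \<subseteq> S" unfolding sub_def by blast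
  have rr: "r \<in> sub S r" using r unfolding sub_def by simp
  have reach: "?Rt\<^sup>*\<^sup>* r w \<and> w \<in> sub S r" if "?Rs\<^sup>*\<^sup>* r w" for w
    using that
  proof (induction rule: rtranclp_induct)
    case base then show ?case using rr by simp
  next
    case (step y z)
    then have yz: "y \<in> sub S r" "z \<in> S" "edge y z" by auto
    then have "z \<in> sub S r" by (rule sub_step)
    then have "?Rt y z" using yz by simp
    have "?Rt\<^sup>*\<^sup>* r y" using step.IH by simp
    then have "?Rt\<^sup>*\<^sup>* r z" using \<open>?Rt y z\<close> by (rule rtranclp.rtrancl_into_rtrancl)
    then show ?case using \<open>z \<in> sub S r\<close> by simp
  qed
  have A: "sub S r \<subseteq> G" using sS P unfolding partial_sol_def by blast
  have B: "\<forall>w \<in> sub S r. ?Rt\<^sup>*\<^sup>* r w" using reach unfolding sub_def by blast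
  have C: "\<forall>a \<in> sub S r. is_and a \<longrightarrow> (\<forall>w. edge a w \<longrightarrow> w \<in> sub S r)"
  proof (intro ballI allI impI)
    fix a w assume a: "a \<in> sub S r" "is_and a" "edge a w"
    then have "w \<in> S" using P sS unfolding partial_sol_def by blast
    with a show "w \<in> sub S r" using sub_step by blast
  qed
  have D: "\<forall>v \<in> sub S r. is_or v \<longrightarrow> (\<exists>!w. w \<in> sub S r \<and> edge v w)"
  proof (intro ballI impI)
    fix v assume v: "v \<in> sub S r" "is_or v"
    then have "v \<in> S" using sS by blast
    then obtain w where w: "w \<in> S" "edge v w" and u: "\<forall>w'. w' \<in> S \<and> edge v w' \<longrightarrow> w' = w"
      using P v(2) unfolding partial_sol_def by metis
    have "w \<in> sub S r" using v(1) w sub_step by blast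
    then show "\<exists>!w. w \<in> sub S r \<and> edge v w" using u w sS by blast
  qed
  show ?thesis unfolding partial_sol_def using A rr B C D by blast
qed

lemma or_child_unique:
  assumes P: "partial_sol G x S" and "v \<in> S" "is_or v" "w \<in> S" "edge v w" "w' \<in> S" "edge v w'"
  shows "w' = w"
proof -
  have "\<exists>!w. w \<in> S \<and> edge v w" using assms(1-3) unfolding partial_sol_def by blast
  then show ?thesis using assms(4-7) by blast
qed

lemma S_cover:
  assumes P: "partial_sol G x S" and ox: "x = OrN I d" and a: "a = AndN I d f"
    and aS: "a \<in> S" and ex: "edge x a"
    and o0: "o0 = OrN (restr I f False) (Suc d)" and o1: "o1 = OrN (restr I f True) (Suc d)"
  shows "S = insert x (insert a (sub S o0 \<union> sub S o1))" "o0 \<in> S" "o1 \<in> S"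
proof -
  let ?Rs = "\<lambda>a b. a \<in> S \<and> b \<in> S \<and> edge a b"
  have ea: "edge a o0" "edge a o1" using a o0 o1 by simp_all
  show oS: "o0 \<in> S" "o1 \<in> S" using P aS ea a unfolding partial_sol_def by auto
  have xS: "x \<in> S" using P unfolding partial_sol_def by blast
  have isx: "is_or x" using ox by simp
  have ach: "w = o0 \<or> w = o1" if "edge a w" for w using that a o0 o1 by simp
  have "w \<in> insert x (insert a (sub S o0 \<union> sub S o1))" if "?Rs\<^sup>*\<^sup>* x w" for w
    using that
  proof (induction rule: rtranclp_induct)
    case base then show ?case by simp
  next
    case (step y z)
    then have yz: "y \<in> S" "z \<in> S" "edge y z" by auto
    consider "y = x" | "y = a" | "y \<in> sub S o0" | "y \<in> sub S o1" using step.IH by blast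
    then show ?case
    proof cases
      case 1 then have "z = a" using or_child_unique[OF P xS isx aS ex] yz by blast
      then show ?thesis by simp
    next
      case 2 then have "z = o0 \<or> z = o1" using ach yz by blast
      then show ?thesis using yz unfolding sub_def by auto
    next
      case 3 then show ?thesis using yz sub_step by blast
    next
      case 4 then show ?thesis using yz sub_step by blast
    qed
  qed
  then have "S \<subseteq> insert x (insert a (sub S o0 \<union> sub S o1))" using P unfolding partial_sol_def by blast
  moreover have "insert x (insert a (sub S o0 \<union> sub S o1)) \<subseteq> S" using xS aS unfolding sub_def by blast
  ultimately show "S = insert x (insert a (sub S o0 \<union> sub S o1))" by blast
qed


lemma S_term:
  assumes P: "partial_sol G x S" and isx: "is_or x" and tS: "t \<in> S" and et: "edge x t" and tt: "is_term t"
  shows "S = {x, t}"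
proof -
  let ?Rs = "\<lambda>a b. a \<in> S \<and> b \<in> S \<and> edge a b"
  have xS: "x \<in> S" using P unfolding partial_sol_def by blast
  have nt: "\<not> edge t z" for z using tt by (cases t) auto
  have "w \<in> {x, t}" if "?Rs\<^sup>*\<^sup>* x w" for w
    using that
  proof (induction rule: rtranclp_induct)
    case base then show ?case by simp
  next
    case (step y z)
    then have yz: "y \<in> S" "z \<in> S" "edge y z" by auto
    then have "y = x" using step.IH nt by auto
    then show ?case using or_child_unique[OF P xS isx tS et] yz by blast
  qed
  then show ?thesis using P xS tS unfolding partial_sol_def by blast
qed

lemma term_cost:
  assumes isx: "is_or x" and et: "edge x t" and tt: "is_term t"
  shows "psol_cost {x, t} = cost x t"
proof -
  have nt: "\<not> edge t z" for z using tt by (cases t) auto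
  have nx: "\<not> edge x x" using edge_or[of x x] isx by blast
  have "Es {x, t} = {(x, t)}" using nt nx et unfolding Es_def by auto
  then show ?thesis by (simp add: psol_cost_Es)
qed

lemma psol_term:
  assumes xG: "x \<in> G" and tG: "t \<in> G" and ox: "is_or x" and et: "edge x t" and tt: "is_term t"
  shows "partial_sol G x {x, t}"
proof -
  have nx: "\<not> edge x x" using edge_or[of x x] ox by blast
  have tx: "t \<noteq> x" using ox tt by (cases x) auto
  have nat: "\<not> is_and t" "\<not> is_or t" using tt by (cases t; simp)+
  have nax: "\<not> is_and x" using ox by (cases x; simp)
  have A: "{x, t} \<subseteq> G" using xG tG by blast
  have B: "\<forall>w\<in>{x,t}. (\<lambda>a b. a \<in> {x,t} \<and> b \<in> {x,t} \<and> edge a b)\<^sup>*\<^sup>* x w"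
  proof
    fix w assume "w \<in> {x,t}"
    moreover have "(\<lambda>a b. a \<in> {x,t} \<and> b \<in> {x,t} \<and> edge a b)\<^sup>*\<^sup>* x t"
      by (rule r_into_rtranclp) (simp add: et)
    ultimately show "(\<lambda>a b. a \<in> {x,t} \<and> b \<in> {x,t} \<and> edge a b)\<^sup>*\<^sup>* x w" by auto
  qed
  have C: "\<forall>a\<in>{x,t}. is_and a \<longrightarrow> (\<forall>w. edge a w \<longrightarrow> w \<in> {x,t})" using nat nax by blast
  have D: "\<forall>v\<in>{x,t}. is_or v \<longrightarrow> (\<exists>!w. w \<in> {x,t} \<and> edge v w)"
  proof (intro ballI impI)
    fix v assume "v \<in> {x,t}" "is_or v"
    then have "v = x" using nat by blast
    then show "\<exists>!w. w \<in> {x,t} \<and> edge v w" using et nx by blast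
  qed
  show ?thesis unfolding partial_sol_def using A B C D by blast
qed


lemma rt_lift:
  assumes "(\<lambda>a b. a \<in> A \<and> b \<in> A \<and> edge a b)\<^sup>*\<^sup>* u w" and "A \<subseteq> B"
  shows "(\<lambda>a b. a \<in> B \<and> b \<in> B \<and> edge a b)\<^sup>*\<^sup>* u w"
  using assms(1)
proof (induction rule: rtranclp_induct)
  case base then show ?case by simp
next
  case (step y z)
  then have "(\<lambda>a b. a \<in> B \<and> b \<in> B \<and> edge a b) y z" using assms(2) by auto
  with step.IH show ?case by (rule rtranclp.rtrancl_into_rtrancl)
qed

lemma or_AndN:
  assumes "edge (OrN I d) a" "is_and a"
  obtains f where "a = AndN I d f" "d < F" "f \<in> Vs I"
  using assms by auto

lemma psol_build:
  assumes x: "x = OrN I d" and a: "a = AndN I d f" and ex: "edge x a"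
  and o0: "o0 = OrN (restr I f False) (Suc d)" and o1: "o1 = OrN (restr I f True) (Suc d)"
  and P0: "partial_sol G o0 S0" and P1: "partial_sol G o1 S1" and xG: "x \<in> G" and aG: "a \<in> G"
  shows "partial_sol G x (insert x (insert a (S0 \<union> S1)))"
proof -
  have R0: "\<forall>w\<in>S0. edge\<^sup>*\<^sup>* o0 w" using psol_reach[OF P0] by blast
  have R1: "\<forall>w\<in>S1. edge\<^sup>*\<^sup>* o1 w" using psol_reach[OF P1] by blast
  note sp = sep[OF x a ex o0 o1 R0 R1]
  let ?S = "insert x (insert a (S0 \<union> S1))"
  let ?Rs = "\<lambda>a b. a \<in> ?S \<and> b \<in> ?S \<and> edge a b"
  have i0: "o0 \<in> S0" and i1: "o1 \<in> S1" using P0 P1 unfolding partial_sol_def by blast+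
  have ea0: "edge a o0" and ea1: "edge a o1" using a o0 o1 by simp_all
  have ach: "w = o0 \<or> w = o1" if "edge a w" for w using that a o0 o1 by simp
  have ox: "is_or x" using x by simp
  have na: "\<not> is_or a" using a by simp
  have A: "?S \<subseteq> G" using P0 P1 xG aG unfolding partial_sol_def by blast
  have xa: "?Rs\<^sup>*\<^sup>* x a" by (rule r_into_rtranclp) (simp add: ex)
  have x0: "?Rs\<^sup>*\<^sup>* x o0"
    by (rule rtranclp.rtrancl_into_rtrancl[OF xa]) (simp add: ea0 i0)
  have x1: "?Rs\<^sup>*\<^sup>* x o1"
    by (rule rtranclp.rtrancl_into_rtrancl[OF xa]) (simp add: ea1 i1)
  have B: "\<forall>w\<in>?S. ?Rs\<^sup>*\<^sup>* x w"
  proof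
    fix w assume w: "w \<in> ?S"
    consider "w = x" | "w = a" | "w \<in> S0" | "w \<in> S1" using w by blast
    then show "?Rs\<^sup>*\<^sup>* x w"
    proof cases
      case 1 then show ?thesis by simp
    next
      case 2 then show ?thesis using xa by simp
    next
      case 3
      then have "(\<lambda>a b. a \<in> S0 \<and> b \<in> S0 \<and> edge a b)\<^sup>*\<^sup>* o0 w" using P0 unfolding partial_sol_def by blast
      then have "?Rs\<^sup>*\<^sup>* o0 w" by (rule rt_lift) blast
      then show ?thesis using x0 by (rule rtranclp_trans[rotated])
    next
      case 4
      then have "(\<lambda>a b. a \<in> S1 \<and> b \<in> S1 \<and> edge a b)\<^sup>*\<^sup>* o1 w" using P1 unfolding partial_sol_def by blast
      then have "?Rs\<^sup>*\<^sup>* o1 w" by (rule rt_lift) blast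
      then show ?thesis using x1 by (rule rtranclp_trans[rotated])
    qed
  qed
  have C: "\<forall>v\<in>?S. is_and v \<longrightarrow> (\<forall>w. edge v w \<longrightarrow> w \<in> ?S)"
  proof (intro ballI impI allI)
    fix v w assume v: "v \<in> ?S" "is_and v" "edge v w"
    have "\<not> is_and x" using x by simp
    then consider "v = a" | "v \<in> S0" | "v \<in> S1" using v by blast
    then show "w \<in> ?S"
    proof cases
      case 1 then show ?thesis using ach v i0 i1 by blast
    next
      case 2 then show ?thesis using P0 v unfolding partial_sol_def by blast
    next
      case 3 then show ?thesis using P1 v unfolding partial_sol_def by blast
    qed
  qed
  have D: "\<forall>v\<in>?S. is_or v \<longrightarrow> (\<exists>!w. w \<in> ?S \<and> edge v w)"
  proof (intro ballI impI)
    fix v assume v: "v \<in> ?S" "is_or v"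
    consider "v = x" | "v \<in> S0" | "v \<in> S1" using v na by blast
    then show "\<exists>!w. w \<in> ?S \<and> edge v w"
    proof cases
      case 1
      have "w = a" if "w \<in> ?S" "edge x w" for w
      proof -
        have "\<not> is_or w" using edge_or[OF that(2) ox] by blast
        then have "w \<noteq> x" using ox by auto
        moreover have "w \<notin> S0 \<union> S1" using sp(9)[of w] that(2) by blast
        ultimately show "w = a" using that(1) by blast
      qed
      then show ?thesis using 1 ex by blast
    next
      case 2
      then obtain w0 where w0: "w0 \<in> S0" "edge v w0" and u: "\<forall>w. w \<in> S0 \<and> edge v w \<longrightarrow> w = w0"
        using P0 v(2) unfolding partial_sol_def by metis
      have "w \<in> S0" if "w \<in> ?S" "edge v w" for w using sp(7)[OF 2 that(2)] that(1) by blast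
      then show ?thesis using w0 u by blast
    next
      case 3
      then obtain w0 where w0: "w0 \<in> S1" "edge v w0" and u: "\<forall>w. w \<in> S1 \<and> edge v w \<longrightarrow> w = w0"
        using P1 v(2) unfolding partial_sol_def by metis
      have "w \<in> S1" if "w \<in> ?S" "edge v w" for w using sp(8)[OF 3 that(2)] that(1) by blast
      then show ?thesis using w0 u by blast
    qed
  qed
  show ?thesis unfolding partial_sol_def using A B C D by blast
qed

lemma Tv_orval:
  assumes fG: "finite G" and xG: "x \<in> G" and ox: "is_or x"
  shows "Tv G x \<le> orval G (Tv G) x"
  unfolding orval_def
proof (rule Inf_greatest)
  fix y assume "y \<in> {cost x a + andval (Tv G) a |a. a \<in> G \<and> is_and a \<and> edge x a}
                     \<union> {cost x t |t. t \<in> G \<and> is_term t \<and> edge x t}"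
  then consider (A) a where "y = cost x a + andval (Tv G) a" "a \<in> G" "is_and a" "edge x a"
    | (T) t where "y = cost x t" "t \<in> G" "is_term t" "edge x t" by blast
  then show "Tv G x \<le> y"
  proof cases
    case T
    then show ?thesis using Tv_le[OF fG psol_term[OF xG T(2) ox T(4,3)]] term_cost[OF ox T(4,3)] by simp
  next
    case A
    obtain I d where x: "x = OrN I d" using ox by (cases x) auto
    obtain f where a: "a = AndN I d f" using or_AndN[of I d a] A x by metis
    define o0 where "o0 = OrN (restr I f False) (Suc d)"
    define o1 where "o1 = OrN (restr I f True) (Suc d)"
    have y: "y = cost x a + (Tv G o0 + Tv G o1)" using A(1) a o0_def o1_def by simp
    show ?thesis
    proof (cases "{S. partial_sol G o0 S} = {} \<or> {S. partial_sol G o1 S} = {}")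
      case True
      then have "Tv G o0 = \<infinity> \<or> Tv G o1 = \<infinity>" unfolding Tv_def by auto
      then have "y = \<infinity>" using y by auto
      then show ?thesis by simp
    next
      case False
      then obtain S0 S1 where S0: "partial_sol G o0 S0" "Tv G o0 = psol_cost S0"
        and S1: "partial_sol G o1 S1" "Tv G o1 = psol_cost S1"
        using Tv_attain[OF fG] by meson
      have R0: "\<forall>w\<in>S0. edge\<^sup>*\<^sup>* o0 w" using psol_reach[OF S0(1)] by blast
      have R1: "\<forall>w\<in>S1. edge\<^sup>*\<^sup>* o1 w" using psol_reach[OF S1(1)] by blast
      have i0: "o0 \<in> S0" and i1: "o1 \<in> S1" using S0 S1 unfolding partial_sol_def by blast+
      have f0: "finite S0" and f1: "finite S1" using S0 S1 fG unfolding partial_sol_def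
        by (auto intro: finite_subset)
      have P: "partial_sol G x (insert x (insert a (S0 \<union> S1)))"
        using psol_build[OF x a A(4) o0_def o1_def S0(1) S1(1) xG A(2)] .
      have "Tv G x \<le> psol_cost (insert x (insert a (S0 \<union> S1)))" by (rule Tv_le[OF fG P])
      also have "\<dots> = cost x a + psol_cost S0 + psol_cost S1"
        by (rule decomp[OF x a A(4) o0_def o1_def R0 R1 i0 i1 f0 f1])
      also have "\<dots> = y" using y S0(2) S1(2) by (simp add: add.assoc)
      finally show ?thesis .
    qed
  qed
qed


lemma orval_lower_and:
  "a \<in> G \<Longrightarrow> is_and a \<Longrightarrow> edge x a \<Longrightarrow> orval G V x \<le> cost x a + andval V a"
  unfolding orval_def by (rule Inf_lower) blast

lemma orval_lower_term:
  "t \<in> G \<Longrightarrow> is_term t \<Longrightarrow> edge x t \<Longrightarrow> orval G V x \<le> cost x t"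
  unfolding orval_def by (rule Inf_lower) blast

lemma le_psol:
  assumes fG: "finite G" and H: "\<forall>y\<in>G. is_or y \<longrightarrow> V y \<le> orval G V y"
  shows "partial_sol G x S \<Longrightarrow> is_or x \<Longrightarrow> V x \<le> psol_cost S"
proof (induction "card S" arbitrary: x S rule: less_induct)
  case less
  have SG: "S \<subseteq> G" and xS: "x \<in> S" using less.prems unfolding partial_sol_def by blast+
  have fS: "finite S" using SG fG by (rule finite_subset)
  have xG: "x \<in> G" using SG xS by blast
  obtain w where wS: "w \<in> S" and ew: "edge x w"
    using less.prems xS unfolding partial_sol_def by metis
  have wG: "w \<in> G" using wS SG by blast
  have Vx: "V x \<le> orval G V x" using H xG less.prems(2) by blast
  have nw: "\<not> is_or w" using edge_or[OF ew less.prems(2)] by blast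
  show ?case
  proof (cases "is_term w")
    case True
    have "S = {x, w}" by (rule S_term[OF less.prems(1,2) wS ew True])
    then have "psol_cost S = cost x w" using term_cost[OF less.prems(2) ew True] by simp
    moreover have "orval G V x \<le> cost x w" by (rule orval_lower_term[OF wG True ew])
    ultimately show ?thesis using Vx by simp
  next
    case False
    then have aw: "is_and w" using nw by (cases w) auto
    obtain I d where x: "x = OrN I d" using less.prems(2) by (cases x) auto
    obtain f where a: "w = AndN I d f" using or_AndN[of I d w] aw ew x by metis
    define o0 where "o0 = OrN (restr I f False) (Suc d)"
    define o1 where "o1 = OrN (restr I f True) (Suc d)"
    note cov = S_cover[OF less.prems(1) x a wS ew o0_def o1_def]
    have P0: "partial_sol G o0 (sub S o0)" by (rule sub_psol[OF less.prems(1) cov(2)])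
    have P1: "partial_sol G o1 (sub S o1)" by (rule sub_psol[OF less.prems(1) cov(3)])
    have R0: "\<forall>w\<in>sub S o0. edge\<^sup>*\<^sup>* o0 w" using psol_reach[OF P0] by blast
    have R1: "\<forall>w\<in>sub S o1. edge\<^sup>*\<^sup>* o1 w" using psol_reach[OF P1] by blast
    note sp = sep[OF x a ew o0_def o1_def R0 R1]
    have ss0: "sub S o0 \<subseteq> S" and ss1: "sub S o1 \<subseteq> S" unfolding sub_def by blast+
    have c0: "card (sub S o0) < card S"
      by (rule psubset_card_mono[OF fS]) (use ss0 sp(1) xS in blast)
    have c1: "card (sub S o1) < card S"
      by (rule psubset_card_mono[OF fS]) (use ss1 sp(2) xS in blast)
    have o0r: "is_or o0" and o1r: "is_or o1" using o0_def o1_def by simp_all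
    have IH0: "V o0 \<le> psol_cost (sub S o0)" using less.hyps[OF c0 P0 o0r] .
    have IH1: "V o1 \<le> psol_cost (sub S o1)" using less.hyps[OF c1 P1 o1r] .
    have i0: "o0 \<in> sub S o0" and i1: "o1 \<in> sub S o1" using P0 P1 unfolding partial_sol_def by blast+
    have f0: "finite (sub S o0)" and f1: "finite (sub S o1)" using ss0 ss1 fS by (auto intro: finite_subset)
    have "V x \<le> cost x w + andval V w" using Vx orval_lower_and[OF wG aw ew] by (rule order_trans)
    also have "\<dots> = cost x w + (V o0 + V o1)" using a o0_def o1_def by simp
    also have "\<dots> \<le> cost x w + (psol_cost (sub S o0) + psol_cost (sub S o1))"
      using IH0 IH1 by (intro add_mono) auto
    also have "\<dots> = psol_cost (insert x (insert w (sub S o0 \<union> sub S o1)))"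
      using decomp[OF x a ew o0_def o1_def R0 R1 i0 i1 f0 f1] by (simp add: add.assoc)
    also have "\<dots> = psol_cost S" using cov(1) by simp
    finally show ?thesis .
  qed
qed


lemma andval_cong: "(\<forall>w. edge a w \<longrightarrow> V w = V' w) \<Longrightarrow> andval V a = andval V' a"
  by (cases a) auto

lemma andval_mono: "(\<forall>y. is_or y \<longrightarrow> V y \<le> V' y) \<Longrightarrow> andval V a \<le> andval V' a"
  by (cases a) (auto intro!: add_mono)

lemma orval_cong_V:
  assumes "\<forall>a\<in>G. is_and a \<longrightarrow> edge x a \<longrightarrow> (\<forall>w. edge a w \<longrightarrow> V w = V' w)"
  shows "orval G V x = orval G V' x"
proof -
  have "{cost x a + andval V a |a. a \<in> G \<and> is_and a \<and> edge x a}
      = {cost x a + andval V' a |a. a \<in> G \<and> is_and a \<and> edge x a}"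
  proof (intro set_eqI iffI)
    fix y assume "y \<in> {cost x a + andval V a |a. a \<in> G \<and> is_and a \<and> edge x a}"
    then obtain a where "y = cost x a + andval V a" "a \<in> G" "is_and a" "edge x a" by blast
    moreover have "andval V a = andval V' a" using assms calculation(2-4) by (intro andval_cong) blast
    ultimately have "y = cost x a + andval V' a \<and> a \<in> G \<and> is_and a \<and> edge x a" by simp
    then show "y \<in> {cost x a + andval V' a |a. a \<in> G \<and> is_and a \<and> edge x a}" by blast
  next
    fix y assume "y \<in> {cost x a + andval V' a |a. a \<in> G \<and> is_and a \<and> edge x a}"
    then obtain a where "y = cost x a + andval V' a" "a \<in> G" "is_and a" "edge x a" by blast
    moreover have "andval V a = andval V' a" using assms calculation(2-4) by (intro andval_cong) blast
    ultimately have "y = cost x a + andval V a \<and> a \<in> G \<and> is_and a \<and> edge x a" by simp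
    then show "y \<in> {cost x a + andval V a |a. a \<in> G \<and> is_and a \<and> edge x a}" by blast
  qed
  then show ?thesis unfolding orval_def by simp
qed

lemma orval_mono:
  assumes "\<forall>y. is_or y \<longrightarrow> V y \<le> V' y"
  shows "orval G V x \<le> orval G V' x"
  unfolding orval_def
proof (rule Inf_mono)
  fix b assume "b \<in> {cost x a + andval V' a |a. a \<in> G \<and> is_and a \<and> edge x a} \<union> {cost x t |t. t \<in> G \<and> is_term t \<and> edge x t}"
  then consider (A) a where "b = cost x a + andval V' a" "a \<in> G" "is_and a" "edge x a"
    | (T) t where "b = cost x t" "t \<in> G" "is_term t" "edge x t" by blast
  then show "\<exists>c\<in>{cost x a + andval V a |a. a \<in> G \<and> is_and a \<and> edge x a} \<union> {cost x t |t. t \<in> G \<and> is_term t \<and> edge x t}. c \<le> b"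
  proof cases
    case A
    have "cost x a + andval V a \<le> b" using A(1) andval_mono[OF assms, of a] by (simp add: add_left_mono)
    then show ?thesis using A by blast
  next
    case T then show ?thesis by blast
  qed
qed

lemma orval_G_cong:
  assumes "\<forall>w. \<not> is_or w \<longrightarrow> edge x w \<longrightarrow> (w \<in> G \<longleftrightarrow> w \<in> G')"
  shows "orval G V x = orval G' V x"
proof -
  have na: "\<not> is_or a" if "is_and a" for a using that by (cases a) auto
  have nt: "\<not> is_or a" if "is_term a" for a using that by (cases a) auto
  have "{cost x a + andval V a |a. a \<in> G \<and> is_and a \<and> edge x a} = {cost x a + andval V a |a. a \<in> G' \<and> is_and a \<and> edge x a}"
    using assms na by blast
  moreover have "{cost x t |t. t \<in> G \<and> is_term t \<and> edge x t} = {cost x t |t. t \<in> G' \<and> is_term t \<and> edge x t}"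
    using assms nt by blast
  ultimately show ?thesis unfolding orval_def by simp
qed

lemma orval_empty:
  assumes "\<forall>w. edge x w \<longrightarrow> w \<notin> G"
  shows "orval G V x = \<infinity>"
proof -
  have "{cost x a + andval V a |a. a \<in> G \<and> is_and a \<and> edge x a} \<union> {cost x t |t. t \<in> G \<and> is_term t \<and> edge x t} = {}"
    using assms by blast
  then have "orval G V x = Inf {}" unfolding orval_def by (simp only:)
  then show ?thesis by (simp add: top_ereal_def)
qed


lemma prop_correct:
  assumes "propagate better G V Q V'"
  shows "(\<forall>v old. better v old \<longleftrightarrow> v < old) \<Longrightarrow> finite G \<Longrightarrow> \<forall>x. is_or x \<longrightarrow> Tv G x \<le> V x \<Longrightarrow>
    \<forall>x\<in>G. is_or x \<longrightarrow> x \<notin> Q \<longrightarrow> V x \<le> orval G V x \<Longrightarrow> \<forall>q\<in>Q. q \<in> G \<and> is_or q \<Longrightarrow>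
    \<forall>x. is_or x \<longrightarrow> V' x = Tv G x"
  using assms
proof (induction rule: propagate.induct)
  case (prop_done better G V)
  show ?case
  proof (intro allI impI)
    fix x assume ox: "is_or x"
    have "V x \<le> Tv G x"
    proof (cases "x \<in> G")
      case True
      have H: "\<forall>y\<in>G. is_or y \<longrightarrow> V y \<le> orval G V y" using prop_done.prems(4) by blast
      show ?thesis using le_psol[OF prop_done.prems(2) H _ ox] by (intro Tv_ge[OF prop_done.prems(2)])
    next
      case False then show ?thesis using Tv_notin by simp
    qed
    then show "V x = Tv G x" using prop_done.prems(3) ox by (simp add: order_antisym)
  qed
next
  case (prop_upd u Q better G V V')
  let ?V1 = "V(u := orval G V u)"
  have fG: "finite G" using prop_upd.prems(2) .
  have TV: "\<forall>x. is_or x \<longrightarrow> Tv G x \<le> V x" using prop_upd.prems(3) .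
  have HQ: "\<forall>x\<in>G. is_or x \<longrightarrow> x \<notin> Q \<longrightarrow> V x \<le> orval G V x" using prop_upd.prems(4) .
  have QG: "\<forall>q\<in>Q. q \<in> G \<and> is_or q" using prop_upd.prems(5) .
  have uG: "u \<in> G" and ou: "is_or u" using QG prop_upd.hyps(1) by auto
  have a1: "\<forall>x. is_or x \<longrightarrow> Tv G x \<le> ?V1 x"
  proof (intro allI impI)
    fix x assume ox: "is_or x"
    show "Tv G x \<le> ?V1 x"
    proof (cases "x = u")
      case True
      have "Tv G u \<le> orval G (Tv G) u" by (rule Tv_orval[OF fG uG ou])
      also have "\<dots> \<le> orval G V u" by (rule orval_mono) (use TV in blast)
      finally show ?thesis using True by simp
    next
      case False then show ?thesis using TV ox by simp
    qed
  qed
  have a2: "\<forall>x\<in>G. is_or x \<longrightarrow> x \<notin> (Q - {u}) \<union> parents G u \<longrightarrow> ?V1 x \<le> orval G ?V1 x"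
  proof (intro ballI impI)
    fix x assume xG: "x \<in> G" and ox: "is_or x" and xq: "x \<notin> (Q - {u}) \<union> parents G u"
    show "?V1 x \<le> orval G ?V1 x"
    proof (cases "x = u")
      case True
      have "orval G ?V1 u = orval G V u"
      proof (rule orval_cong_V, intro ballI impI allI)
        fix a w assume "a \<in> G" "is_and a" "edge u a" "edge a w"
        then have "depth w = Suc (depth a)" "depth a = depth u" using edge_and[of a w] edge_or[of u a] ou by blast+
        then have "w \<noteq> u" by auto
        then show "?V1 w = V w" by simp
      qed
      then show ?thesis using True by simp
    next
      case False
      then have "x \<notin> Q" using xq by blast
      then have le: "V x \<le> orval G V x" using HQ xG ox by blast
      have "orval G ?V1 x = orval G V x"
      proof (rule orval_cong_V, intro ballI impI allI)
        fix a w assume a: "a \<in> G" "is_and a" "edge x a" "edge a w"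
        have "w \<noteq> u"
        proof
          assume "w = u"
          then have "x \<in> parents G u" unfolding parents_def using a xG ox by blast
          then show False using xq by blast
        qed
        then show "?V1 w = V w" by simp
      qed
      then show ?thesis using le False by simp
    qed
  qed
  have a3: "\<forall>q\<in>(Q - {u}) \<union> parents G u. q \<in> G \<and> is_or q"
    using QG unfolding parents_def by blast
  show ?case using prop_upd.IH[OF prop_upd.prems(1) fG a1 a2 a3] .
next
  case (prop_noupd u Q better G V V')
  have "\<not> orval G V u < V u" using prop_noupd.hyps(3) prop_noupd.prems(1) by blast
  then have "V u \<le> orval G V u" by simp
  then have a2: "\<forall>x\<in>G. is_or x \<longrightarrow> x \<notin> Q - {u} \<longrightarrow> V x \<le> orval G V x" using prop_noupd.prems(4) by blast
  have a3: "\<forall>q\<in>Q - {u}. q \<in> G \<and> is_or q" using prop_noupd.prems(5) by blast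
  show ?case using prop_noupd.IH[OF prop_noupd.prems(1-3) a2 a3] .
qed


definition inv :: "state \<Rightarrow> bool" where
  "inv st = (case st of (G, E, LB, UB) \<Rightarrow>
     finite G \<and> root \<in> G \<and> E \<subseteq> G \<and> (\<forall>p\<in>E. is_or p \<and> expand_nodes p \<subseteq> G)
     \<and> (\<forall>p w. is_or p \<longrightarrow> edge p w \<longrightarrow> w \<in> G \<longrightarrow> p \<in> E)
     \<and> (\<forall>x. is_or x \<longrightarrow> UB x = Tv G x))"

lemma descend_ok:
  assumes "descend G E LB UB u v"
  shows "u \<in> G \<Longrightarrow> is_or u \<Longrightarrow> \<forall>p\<in>E. expand_nodes p \<subseteq> G \<Longrightarrow> v \<in> G \<and> is_or v \<and> v \<notin> E"
  using assms
proof (induction rule: descend.induct)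
  case (stop u E G LB UB)
  then show ?case by simp
next
  case (down u E a I d f G LB o0 o1 UB v)
  have g0: "o0 \<in> grandchildren u" unfolding grandchildren_def using down.hyps(2,4,6) by (auto intro!: exI[of _ "AndN I d f"])
  have g1: "o1 \<in> grandchildren u" unfolding grandchildren_def using down.hyps(2,4,7) by (auto intro!: exI[of _ "AndN I d f"])
  have "grandchildren u \<subseteq> G" using down.prems(3) down.hyps(1) unfolding expand_nodes_def by blast
  then have "(if UB o0 - LB o0 > UB o1 - LB o1 then o0 else o1) \<in> G" using g0 g1 by auto
  moreover have "is_or (if UB o0 - LB o0 > UB o1 - LB o1 then o0 else o1)" using down.hyps(6,7) by auto
  ultimately show ?case using down.IH down.prems(3) by blast
qed

lemma finite_expand:
  assumes "is_or ov" shows "finite (expand_nodes ov)"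
proof -
  obtain I d where ov: "ov = OrN I d" using assms by (cases ov) auto
  have VF: "Vs I \<subseteq> {1..F}" unfolding Vs_def by blast
  have t: "{t. is_term t \<and> edge ov t} \<subseteq> {TermN I d}" using ov by auto
  have a: "{a. is_and a \<and> edge ov a} \<subseteq> (\<lambda>f. AndN I d f) ` {1..F}" using ov VF by auto
  have g: "grandchildren ov \<subseteq> (\<lambda>(f,k). OrN (restr I f k) (Suc d)) ` ({1..F} \<times> UNIV)"
  proof
    fix w assume "w \<in> grandchildren ov"
    then obtain a where a: "is_and a" "edge ov a" "edge a w" unfolding grandchildren_def by blast
    then obtain f where "a = AndN I d f" "f \<in> Vs I" using ov or_AndN by metis
    then obtain k where "w = OrN (restr I f k) (Suc d)" "f \<in> {1..F}" using a(3) VF by auto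
    then show "w \<in> (\<lambda>(f,k). OrN (restr I f k) (Suc d)) ` ({1..F} \<times> UNIV)" by force
  qed
  show ?thesis unfolding expand_nodes_def
    using finite_subset[OF t] finite_subset[OF a] finite_subset[OF g] by auto
qed

lemma inv_init: "inv init"
proof -
  have "Tv {root} x = \<infinity>" for x
  proof -
    have "\<not> partial_sol {root} x S" for S
    proof
      assume P: "partial_sol {root} x S"
      then have "S = {root}" "x = root" unfolding partial_sol_def by auto
      moreover have "is_or root" unfolding root_def by simp
      ultimately obtain w where "w \<in> S" "edge root w" using P unfolding partial_sol_def by blast
      then have "edge root root" using \<open>S = {root}\<close> by simp
      then show False using edge_or[of root root] \<open>is_or root\<close> by blast
    qed
    then show ?thesis unfolding Tv_def by simp
  qed
  moreover have "\<not> (is_or p \<and> edge p root)" for p using edge_or[of p root] unfolding root_def by auto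
  ultimately show ?thesis unfolding inv_def init_def by auto
qed

lemma inv_step:
  assumes I: "inv (G, E, LB, UB)" and it: "iter (G, E, LB, UB) st"
  shows "inv st"
  using it
proof (cases rule: iter.cases)
  case (1 ov G2 LB2 LB3 UB3)
  have fG: "finite G" and rG: "root \<in> G" and EG: "E \<subseteq> G"
    and Ex: "\<forall>p\<in>E. is_or p \<and> expand_nodes p \<subseteq> G"
    and Par: "\<forall>p w. is_or p \<longrightarrow> edge p w \<longrightarrow> w \<in> G \<longrightarrow> p \<in> E"
    and UBT: "\<forall>x. is_or x \<longrightarrow> UB x = Tv G x" using I unfolding inv_def by auto
  have rr: "is_or root" unfolding root_def by simp
  have ovp: "ov \<in> G \<and> is_or ov \<and> ov \<notin> E" using descend_ok[OF 1(3) rG rr] Ex by blast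
  then have ovG: "ov \<in> G" and oov: "is_or ov" and ovE: "ov \<notin> E" by auto
  have G2: "G2 = G \<union> expand_nodes ov" using 1 by simp
  have fG2: "finite G2" using G2 fG finite_expand[OF oov] by simp
  have sub: "G \<subseteq> G2" using G2 by blast
  have newch: "edge ov w" if "w \<in> G2" "w \<notin> G" "\<not> is_or w" for w
  proof -
    have "w \<in> expand_nodes ov" using that G2 by blast
    moreover have "\<not> (w \<in> grandchildren ov)"
    proof
      assume "w \<in> grandchildren ov"
      then obtain a where "is_and a" "edge a w" unfolding grandchildren_def by blast
      then show False using edge_and that(3) by blast
    qed
    ultimately show ?thesis unfolding expand_nodes_def by blast
  qed
  have paruniq: "p = q" if "is_or p" "is_or q" "edge p w" "edge q w" for p q w
  proof -
    have "p = OrN (idx w) (depth w)" using edge_or[OF that(3,1)] by blast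
    moreover have "q = OrN (idx w) (depth w)" using edge_or[OF that(4,2)] by blast
    ultimately show ?thesis by simp
  qed
  have Par2: "\<forall>p w. is_or p \<longrightarrow> edge p w \<longrightarrow> w \<in> G2 \<longrightarrow> p \<in> E \<union> {ov}"
  proof (intro allI impI)
    fix p w assume p: "is_or p" "edge p w" "w \<in> G2"
    show "p \<in> E \<union> {ov}"
    proof (cases "w \<in> G")
      case True then show ?thesis using Par p by blast
    next
      case False
      have "\<not> is_or w" using edge_or[OF p(2,1)] by blast
      then have "edge ov w" using newch p(3) False by blast
      then have "p = ov" using paruniq[OF p(1) oov p(2)] by blast
      then show ?thesis by simp
    qed
  qed
  have a1: "\<forall>x. is_or x \<longrightarrow> Tv G2 x \<le> UB x"
    using UBT Tv_mono[OF fG2 fG sub] by simp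
  have a2: "\<forall>x\<in>G2. is_or x \<longrightarrow> x \<notin> {ov} \<longrightarrow> UB x \<le> orval G2 UB x"
  proof (intro ballI impI)
    fix x assume xG2: "x \<in> G2" and ox: "is_or x" and xo: "x \<notin> {ov}"
    have same: "\<forall>w. \<not> is_or w \<longrightarrow> edge x w \<longrightarrow> (w \<in> G \<longleftrightarrow> w \<in> G2)"
    proof (intro allI impI)
      fix w assume w: "\<not> is_or w" "edge x w"
      show "w \<in> G \<longleftrightarrow> w \<in> G2"
      proof
        assume "w \<in> G2"
        show "w \<in> G"
        proof (rule ccontr)
          assume "w \<notin> G"
          then have "edge ov w" using newch \<open>w \<in> G2\<close> w(1) by blast
          then have "x = ov" using paruniq[OF ox oov w(2)] by blast
          then show False using xo by simp
        qed
      qed (use sub in blast)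
    qed
    have e1: "orval G2 UB x = orval G UB x" using orval_G_cong[OF same] by simp
    have e2: "orval G UB x = orval G (Tv G) x"
    proof (rule orval_cong_V, intro ballI impI allI)
      fix a w assume "a \<in> G" "is_and a" "edge x a" "edge a w"
      then have "is_or w" using edge_and by blast
      then show "UB w = Tv G w" using UBT by blast
    qed
    show "UB x \<le> orval G2 UB x"
    proof (cases "x \<in> G")
      case True
      have "UB x = Tv G x" using UBT ox by blast
      also have "\<dots> \<le> orval G (Tv G) x" by (rule Tv_orval[OF fG True ox])
      finally show ?thesis using e1 e2 by simp
    next
      case False
      have "\<forall>w. edge x w \<longrightarrow> w \<notin> G"
      proof (intro allI impI)
        fix w assume "edge x w"
        show "w \<notin> G"
        proof
          assume "w \<in> G"
          then have "x \<in> E" using Par ox \<open>edge x w\<close> by blast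
          then show False using EG False by blast
        qed
      qed
      then have "orval G UB x = \<infinity>" by (rule orval_empty)
      then show ?thesis using e1 by simp
    qed
  qed
  have a3: "\<forall>q\<in>{ov}. q \<in> G2 \<and> is_or q" using ovG oov sub by blast
  have UB3: "\<forall>x. is_or x \<longrightarrow> UB3 x = Tv G2 x"
    by (rule prop_correct[OF \<open>propagate (\<lambda>v old. v < old) G2 UB {ov} UB3\<close> _ fG2 a1 a2 a3]) simp
  have Ex2: "\<forall>p\<in>E \<union> {ov}. is_or p \<and> expand_nodes p \<subseteq> G2" using Ex G2 oov by blast
  show ?thesis unfolding inv_def 1(1) using fG2 rG sub EG ovG Ex2 Par2 UB3 by auto
qed

lemma inv_reach: "iter\<^sup>*\<^sup>* init st \<Longrightarrow> inv st"
proof (induction rule: rtranclp_induct)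
  case base then show ?case by (rule inv_init)
next
  case (step y z)
  obtain G E LB UB where y: "y = (G, E, LB, UB)" by (cases y) auto
  show ?case using inv_step[of G E LB UB z] step y by simp
qed

lemma main:
  assumes "iter\<^sup>*\<^sup>* init s0" "iter s0 (G, E, LB, UB)" "is_or u"
  shows "UB u = Tv G u"
proof -
  have "iter\<^sup>*\<^sup>* init (G, E, LB, UB)" using assms(1,2) by (rule rtranclp.rtrancl_into_rtrancl)
  then have "inv (G, E, LB, UB)" by (rule inv_reach)
  then show ?thesis using assms(3) unfolding inv_def by auto
qed

end

theorem lemma16:
  fixes N F :: nat and X :: "nat \<Rightarrow> nat \<Rightarrow> bool" and Y :: "nat \<Rightarrow> bool"
    and rho1 rho0 alpha beta :: real
    and s0 :: state and G E :: "node set" and LB UB :: "node \<Rightarrow> ereal" and u :: node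
  assumes "rho1 > 0" and "rho0 > 0" and "0 < alpha" and "alpha < 1" and "beta \<ge> 0"
    and "(MT_iter N F X Y rho1 rho0 alpha beta)\<^sup>*\<^sup>* (MT_init N F X Y rho1 rho0 alpha beta) s0"
    and "MT_iter N F X Y rho1 rho0 alpha beta s0 (G, E, LB, UB)"
    and "u \<in> G" and "is_or u"
  shows "(if {S. MT_partial_sol N F X Y rho1 rho0 alpha beta G u S} = {} then UB u = \<infinity>
          else UB u = Min (MT_psol_cost N F X Y rho1 rho0 alpha beta
                             ` {S. MT_partial_sol N F X Y rho1 rho0 alpha beta G u S}))"
proof -
  have "UB u = maptree.Tv F X Y rho1 rho0 alpha beta G u"
    using maptree.main[of N F X Y rho1 rho0 alpha beta s0 G E LB UB u] assms(6,7,9)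
    unfolding MT_iter_def MT_init_def by blast
  then have E: "UB u = (if {S. maptree.partial_sol F X G u S} = {} then \<infinity>
      else Min (maptree.psol_cost F X Y rho1 rho0 alpha beta ` {S. maptree.partial_sol F X G u S}))"
    unfolding maptree.Tv_def .
  show ?thesis
    unfolding MT_partial_sol_def MT_psol_cost_def
  proof (cases "{S. maptree.partial_sol F X G u S} = {}")
    case True
    then show "if {S. maptree.partial_sol F X G u S} = {} then UB u = \<infinity>
      else UB u = Min (maptree.psol_cost F X Y rho1 rho0 alpha beta ` {S. maptree.partial_sol F X G u S})"
      using E unfolding if_P[OF True] by blast
  next
    case False
    then show "if {S. maptree.partial_sol F X G u S} = {} then UB u = \<infinity>
      else UB u = Min (maptree.psol_cost F X Y rho1 rho0 alpha beta ` {S. maptree.partial_sol F X G u S})"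
      using E unfolding if_not_P[OF False] by blast
  qed
qed

end
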